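(* Let $M$ be a finite abelian group of order $m$ and $J$ a Jacobi function on $M$. Suppose $S\subset\hat{M}$ and $i\colon S\to\hat{M}$ satisfy \[ J(\alpha,\beta)=\frac{1}{m}\sum_{x\in S}\alpha(i(x))\,\beta(i(x)x^{-1})\quad\text{for all }\alpha,\beta\in M. \] Then $S$ is closed under inversion, and $i(x)=x\,i(x^{-1})$ for all $x\in S$.
   Context: $\hat{M}$ is the Pontryagin dual of $M$, written multiplicatively; for $\alpha\in M$, $x\in\hat{M}$, $\alpha(x)$ is the value of the character $x$ at $\alpha$. $\delta(\alpha)=1$ if $\alpha=1$ and $0$ otherwise. A Jacobi function on $M$ is a function $J\colon M\times M\to\mathbf{C}$ satisfying: (A) $J(\alpha,\beta)=J(\beta,\alpha)$; (B) with $J^*(\alpha,\beta)=-\delta(\alpha)-\delta(\beta)+J(\alpha,\beta)$, $J^*(\alpha,\beta)J^*(\alpha\beta,\gamma)=J^*(\alpha,\beta\gamma)J^*(\beta,\gamma)$; (C) $\sum_{\beta\in M}J(\alpha_1\beta,\alpha_2\beta^{-1})J(\alpha_3\beta,\alpha_4\beta^{-1})=J(\alpha_1\alpha_4,\alpha_2\alpha_3)$; all for all elements of $M$. *)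

theory Defs
  imports Complex_Main
begin

text \<open>The finite abelian group M is modelled as a finite type of class ab_group_add
  (written additively: the group law a*b of the paper is a + b, the identity 1 is 0,
  and the inverse is -a).\<close>

definition characters :: "('a::{ab_group_add,finite} \<Rightarrow> complex) set" where
  "characters = {\<chi>. (\<forall>a b. \<chi> (a + b) = \<chi> a * \<chi> b) \<and> (\<forall>a. norm (\<chi> a) = 1)}"

definition char_mult :: "('a \<Rightarrow> complex) \<Rightarrow> ('a \<Rightarrow> complex) \<Rightarrow> ('a \<Rightarrow> complex)" where
  "char_mult x y = (\<lambda>a. x a * y a)"

definition char_inv :: "('a \<Rightarrow> complex) \<Rightarrow> ('a \<Rightarrow> complex)" where
  "char_inv x = (\<lambda>a. inverse (x a))"

definition kdelta :: "'a::zero \<Rightarrow> complex" where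
  "kdelta a = (if a = 0 then 1 else 0)"

definition Jstar :: "('a::zero \<Rightarrow> 'a \<Rightarrow> complex) \<Rightarrow> 'a \<Rightarrow> 'a \<Rightarrow> complex" where
  "Jstar J a b = - kdelta a - kdelta b + J a b"

definition jacobi_function :: "('a::{ab_group_add,finite} \<Rightarrow> 'a \<Rightarrow> complex) \<Rightarrow> bool" where
  "jacobi_function J \<longleftrightarrow>
     (\<forall>a b. J a b = J b a) \<and>
     (\<forall>a b c. Jstar J a b * Jstar J (a + b) c = Jstar J a (b + c) * Jstar J b c) \<and>
     (\<forall>a1 a2 a3 a4. (\<Sum>b\<in>UNIV. J (a1 + b) (a2 - b) * J (a3 + b) (a4 - b))
                     = J (a1 + a4) (a2 + a3))"

end

theory Submission
  imports Defs
begin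

lemma char_mult_hom: "\<chi> \<in> characters \<Longrightarrow> \<chi> (a + b) = \<chi> a * \<chi> b"
  unfolding characters_def by auto

lemma char_norm: "\<chi> \<in> characters \<Longrightarrow> norm (\<chi> a) = 1"
  unfolding characters_def by auto

lemma char_cnj: "\<chi> \<in> characters \<Longrightarrow> \<chi> a * cnj (\<chi> a) = 1"
  using complex_norm_square[of "\<chi> a"] char_norm[of \<chi> a] by simp

lemma char_zero: "\<chi> \<in> characters \<Longrightarrow> \<chi> a \<noteq> 0"
  using char_norm[of \<chi> a] by auto

lemma char_pow:
  fixes \<chi> :: "'a::{ab_group_add,finite} \<Rightarrow> complex"
  assumes "\<chi> \<in> characters" shows "\<exists>b. \<chi> a ^ k = \<chi> b"
proof (induction k)
  case 0
  have "\<chi> 0 = \<chi> 0 * \<chi> 0" using char_mult_hom[OF assms, of 0 0] by simp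
  then have "\<chi> 0 = 1" using char_zero[OF assms, of 0] by simp
  then show ?case by (intro exI[of _ 0]) simp
next
  case (Suc k)
  then obtain b where "\<chi> a ^ k = \<chi> b" by blast
  then have "\<chi> a ^ Suc k = \<chi> (a + b)" using char_mult_hom[OF assms] by simp
  then show ?case by blast
qed

lemma char_root:
  fixes \<chi> :: "'a::{ab_group_add,finite} \<Rightarrow> complex"
  assumes "\<chi> \<in> characters" shows "\<chi> a ^ fact (card (UNIV::'a set)) = 1"
proof -
  let ?N = "card (UNIV::'a set)"
  let ?f = "\<lambda>k. \<chi> a ^ k"
  have "?f ` {0..?N} \<subseteq> range \<chi>" using char_pow[OF assms, of a] by blast
  then have "card (?f ` {0..?N}) \<le> card (range \<chi>)" by (intro card_mono) auto
  also have "\<dots> \<le> ?N" by (rule card_image_le) simp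
  finally have "card (?f ` {0..?N}) < card {0..?N}" by simp
  then have "\<not> inj_on ?f {0..?N}" using pigeonhole by blast
  then obtain j k where jk: "j \<in> {0..?N}" "k \<in> {0..?N}" "j \<noteq> k" "?f j = ?f k"
    unfolding inj_on_def by blast
  have "\<exists>d. 1 \<le> d \<and> d \<le> ?N \<and> \<chi> a ^ d = 1"
  proof -
    have nz: "\<chi> a \<noteq> 0" using char_zero[OF assms] by blast
    have gen: "\<chi> a ^ (k' - j') = 1" if "j' < k'" "\<chi> a ^ j' = \<chi> a ^ k'" for j' k'
    proof -
      have "\<chi> a ^ k' = \<chi> a ^ j' * \<chi> a ^ (k' - j')"
        using that(1) by (simp add: power_add[symmetric])
      then show ?thesis using that(2) nz by simp
    qed
    show ?thesis
    proof (cases "j < k")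
      case True
      then show ?thesis using gen[of j k] jk by (intro exI[of _ "k - j"]) auto
    next
      case False
      then have "k < j" using jk by simp
      then show ?thesis using gen[of k j] jk by (intro exI[of _ "j - k"]) auto
    qed
  qed
  then obtain d where d: "1 \<le> d" "d \<le> ?N" "\<chi> a ^ d = 1" by blast
  then obtain e where "fact ?N = d * e" using dvd_fact[of d ?N] by (auto elim: dvdE)
  then show ?thesis using d by (simp add: power_mult)
qed

lemma finite_characters: "finite (characters :: ('a::{ab_group_add,finite} \<Rightarrow> complex) set)"
proof -
  let ?R = "{z::complex. z ^ fact (card (UNIV::'a set)) = 1}"
  have fR: "finite ?R" by (intro finite_roots_unity) (simp add: Suc_le_eq)
  have "(characters :: ('a \<Rightarrow> complex) set) \<subseteq>
     {f. \<forall>x. (x \<in> (UNIV::'a set) \<longrightarrow> f x \<in> ?R) \<and> (x \<notin> UNIV \<longrightarrow> f x = 0)}"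
    using char_root by blast
  moreover have "finite {f. \<forall>x. (x \<in> (UNIV::'a set) \<longrightarrow> f x \<in> ?R) \<and> (x \<notin> UNIV \<longrightarrow> f x = 0)}"
    by (rule finite_set_of_finite_funs) (use fR in auto)
  ultimately show ?thesis by (rule finite_subset)
qed

lemma orth:
  fixes \<chi> \<psi> :: "'a::{ab_group_add,finite} \<Rightarrow> complex"
  assumes "\<chi> \<in> characters" "\<psi> \<in> characters"
  shows "(\<Sum>a\<in>UNIV. \<chi> a * cnj (\<psi> a)) = (if \<chi> = \<psi> then of_nat (card (UNIV::'a set)) else 0)"
proof (cases "\<chi> = \<psi>")
  case True
  then show ?thesis using char_cnj[OF assms(1)] by simp
next
  case False
  then obtain c where c: "\<chi> c \<noteq> \<psi> c" by blast
  define \<phi> where "\<phi> a = \<chi> a * cnj (\<psi> a)" for a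
  have hom: "\<phi> (a + b) = \<phi> a * \<phi> b" for a b
    unfolding \<phi>_def using char_mult_hom[OF assms(1)] char_mult_hom[OF assms(2)] by simp
  have "\<phi> c \<noteq> 1"
  proof
    assume "\<phi> c = 1"
    then have "\<chi> c * cnj (\<psi> c) * \<psi> c = \<psi> c" unfolding \<phi>_def by simp
    then have "\<chi> c * (\<psi> c * cnj (\<psi> c)) = \<psi> c" by (simp add: ac_simps)
    then show False using char_cnj[OF assms(2), of c] c by simp
  qed
  have "(\<Sum>a\<in>UNIV. \<phi> a) = (\<Sum>a\<in>UNIV. \<phi> (a + c))"
    by (rule sum.reindex_bij_witness[of _ "\<lambda>a. a + c" "\<lambda>a. a - c"]) auto
  also have "\<dots> = \<phi> c * (\<Sum>a\<in>UNIV. \<phi> a)" by (simp add: hom sum_distrib_left ac_simps)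
  finally have "(1 - \<phi> c) * (\<Sum>a\<in>UNIV. \<phi> a) = 0" by (simp add: algebra_simps)
  then have "(\<Sum>a\<in>UNIV. \<phi> a) = 0" using \<open>\<phi> c \<noteq> 1\<close> by simp
  then show ?thesis using False by (simp add: \<phi>_def)
qed

theorem mainTheorem7:
  fixes J :: "'a::{ab_group_add,finite} \<Rightarrow> 'a \<Rightarrow> complex"
    and S :: "('a \<Rightarrow> complex) set"
    and i :: "('a \<Rightarrow> complex) \<Rightarrow> ('a \<Rightarrow> complex)"
  assumes "jacobi_function J"
    and "S \<subseteq> characters"
    and "\<forall>x\<in>S. i x \<in> characters"
    and "\<forall>a b. J a b = (1 / of_nat (card (UNIV :: 'a set))) *
                (\<Sum>x\<in>S. i x a * char_mult (i x) (char_inv x) b)"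
  shows "(\<forall>x\<in>S. char_inv x \<in> S) \<and> (\<forall>x\<in>S. i x = char_mult x (i (char_inv x)))"
proof -
  let ?N = "card (UNIV :: 'a set)"
  have Npos: "?N > 0" by (simp add: card_gt_0_iff)
  define p where "p x = i x" for x
  define q where "q x = char_mult (i x) (char_inv x)" for x
  have fS: "finite S" using assms(2) finite_characters finite_subset by blast
  have pc: "p x \<in> characters" if "x \<in> S" for x using assms(3) that p_def by simp
  have qc: "q x \<in> characters" if "x \<in> S" for x
  proof -
    have x: "x \<in> characters" using assms(2) that by blast
    have ix: "i x \<in> characters" using assms(3) that by blast
    show ?thesis unfolding characters_def q_def char_mult_def char_inv_def
      using char_mult_hom[OF x] char_mult_hom[OF ix] char_norm[OF x] char_norm[OF ix]
      by (simp add: norm_mult norm_inverse)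
  qed
  have sym: "(\<Sum>x\<in>S. p x a * q x b) = (\<Sum>x\<in>S. q x a * p x b)" for a b
  proof -
    have "J a b = J b a" using assms(1) unfolding jacobi_function_def by blast
    then have "(1 / of_nat ?N) * (\<Sum>x\<in>S. p x a * q x b) = (1 / of_nat ?N) * (\<Sum>x\<in>S. p x b * q x a)"
      using assms(4) unfolding p_def q_def by metis
    then show ?thesis using Npos by (simp add: ac_simps)
  qed
  have key: "\<exists>y\<in>S. q y = p x0 \<and> p y = q x0" if x0: "x0 \<in> S" for x0
  proof (rule ccontr)
    assume nex: "\<not> ?thesis"
    define T where "T f g = (\<Sum>a\<in>UNIV. \<Sum>b\<in>UNIV. (\<Sum>x\<in>S. f x a * g x b) * cnj (p x0 a) * cnj (q x0 b))" for f g
    have T: "T f g = (\<Sum>x\<in>S. (\<Sum>a\<in>UNIV. f x a * cnj (p x0 a)) * (\<Sum>b\<in>UNIV. g x b * cnj (q x0 b)))" for f g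
    proof -
      have "T f g = (\<Sum>a\<in>UNIV. \<Sum>b\<in>UNIV. \<Sum>x\<in>S. (f x a * cnj (p x0 a)) * (g x b * cnj (q x0 b)))"
        unfolding T_def by (simp only: sum_distrib_right) (simp add: ac_simps)
      also have "\<dots> = (\<Sum>x\<in>S. \<Sum>a\<in>UNIV. \<Sum>b\<in>UNIV. (f x a * cnj (p x0 a)) * (g x b * cnj (q x0 b)))"
        by (simp add: sum.swap[of _ S] sum.swap[of _ S UNIV])
      also have "\<dots> = (\<Sum>x\<in>S. (\<Sum>a\<in>UNIV. f x a * cnj (p x0 a)) * (\<Sum>b\<in>UNIV. g x b * cnj (q x0 b)))"
        by (simp add: sum_product)
      finally show ?thesis .
    qed
    have "T p q = T q p" unfolding T_def using sym by simp
    moreover have "T p q = (\<Sum>x\<in>S. (if p x = p x0 \<and> q x = q x0 then of_nat ?N * of_nat ?N else 0))"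
      unfolding T by (intro sum.cong refl) (simp add: orth pc qc x0)
    moreover have "T q p = (\<Sum>x\<in>S. (if q x = p x0 \<and> p x = q x0 then of_nat ?N * of_nat ?N else 0))"
      unfolding T by (intro sum.cong refl) (simp add: orth pc qc x0)
    moreover have "(\<Sum>x\<in>S. (if q x = p x0 \<and> p x = q x0 then of_nat ?N * of_nat ?N else 0::complex)) = 0"
      using nex by (intro sum.neutral) auto
    moreover have "(\<Sum>x\<in>S. (if p x = p x0 \<and> q x = q x0 then of_nat ?N * of_nat ?N else 0::complex))
        = (\<Sum>x\<in>S. (if x = x0 then of_nat ?N * of_nat ?N else 0))"
    proof (intro sum.cong refl)
      fix x assume xS: "x \<in> S"
      have "p x = p x0 \<and> q x = q x0 \<longleftrightarrow> x = x0"
      proof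
        assume h: "p x = p x0 \<and> q x = q x0"
        show "x = x0"
        proof
          fix a
          have "x a = i x a / q x a" "x0 a = i x0 a / q x0 a"
            using char_zero[OF pc[OF xS]] char_zero[OF pc[OF x0]]
              char_zero[of x a] char_zero[of x0 a] assms(2) xS x0
            by (auto simp: q_def p_def char_mult_def char_inv_def field_simps)
          then show "x a = x0 a" using h by (simp add: p_def)
        qed
      qed simp
      then show "(if p x = p x0 \<and> q x = q x0 then of_nat ?N * of_nat ?N else 0::complex)
        = (if x = x0 then of_nat ?N * of_nat ?N else 0)" by simp
    qed
    moreover have "(\<Sum>x\<in>S. (if x = x0 then of_nat ?N * of_nat ?N else 0::complex)) = of_nat ?N * of_nat ?N"
      using fS x0 by simp
    ultimately show False using Npos by simp
  qed
  have res: "char_inv x0 \<in> S \<and> i x0 = char_mult x0 (i (char_inv x0))" if x0: "x0 \<in> S" for x0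
  proof -
    obtain y where y: "y \<in> S" "q y = p x0" "p y = q x0" using key[OF x0] by blast
    have yx: "y = char_inv x0"
    proof
      fix a
      have "i y a * inverse (y a) = i x0 a" "i y a = i x0 a * inverse (x0 a)"
        using y fun_cong[OF y(2), of a] fun_cong[OF y(3), of a]
        by (auto simp: p_def q_def char_mult_def char_inv_def)
      then have "i x0 a * inverse (x0 a) * inverse (y a) = i x0 a" by simp
      moreover have "x0 a \<noteq> 0" "y a \<noteq> 0" "i x0 a \<noteq> 0"
        using char_zero[OF pc[OF x0], of a] char_zero[of x0 a] char_zero[of y a] assms(2) x0 y(1)
        by (auto simp: p_def)
      ultimately show "y a = char_inv x0 a"
        by (auto simp: char_inv_def field_simps)
    qed
    have "i x0 = q y" using y(2) p_def by simp
    then have "i x0 = char_mult (i (char_inv x0)) (char_inv (char_inv x0))"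
      using yx q_def by simp
    then have "i x0 = char_mult x0 (i (char_inv x0))"
      by (simp add: char_mult_def char_inv_def mult.commute)
    then show ?thesis using yx y(1) by simp
  qed
  show ?thesis using res by blast
qed

end
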